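(* Let $n>1$, $I$ an index set, $S,T\in GL(n+1,\mathbb C)$, and for $r\in I$ let $P_r=S\,\mathrm{diag}\{p_{1r},\dots,p_{n+1,r}\}S^{-1}$, $Q_r=T\,\mathrm{diag}\{q_{1r},\dots,q_{n+1,r}\}T^{-1}$ (all entries nonzero), and assume that for every $r\in I$ the sets $\{\ln\frac{p_{kr}}{p_{n+1,r}}\}_{k=1}^n$ and $\{\ln\frac{q_{kr}}{q_{n+1,r}}\}_{k=1}^n$ are simple. There exists a biholomorphic map $f\colon\mathbb CP^n\to\mathbb CP^n$ with $f(P_rv)=Q_rf(v)$ for all $v\in\mathbb CP^n$, $r\in I$, if and only if there exists a permutation $\varrho$ of $\{1,\dots,n+1\}$ such that $\dfrac{q_{\varrho(k)r}}{q_{\varrho(n+1)r}}=\dfrac{p_{kr}}{p_{n+1,r}}$ for all $r\in I$, $k=1,\dots,n$.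
   Context: A matrix $P\in GL(n+1,\mathbb C)$ acts on $\mathbb CP^n$ by the induced projective transformation. $\ln$ is the principal branch. A set $\{\lambda_1,\dots,\lambda_n\}$ of nonzero complex numbers is simple if for all $k\neq l$, $\lambda_k/\lambda_l\notin\{s,1/s:s\in\mathbb N\}$. *)

theory Defs
  imports "HOL-Analysis.Analysis"
begin

text \<open>Points of complex projective space: nonzero vectors of complex^'n modulo
  nonzero complex scalars.  CP^n corresponds to CARD('n) = n+1.\<close>

definition projrel :: "complex^'n \<Rightarrow> complex^'n \<Rightarrow> bool" where
  "projrel v w \<longleftrightarrow> v \<noteq> 0 \<and> w \<noteq> 0 \<and> (\<exists>c. c \<noteq> 0 \<and> w = c *s v)"

lemma part_equivp_projrel: "part_equivp projrel"
proof (rule part_equivpI)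
  have "projrel (axis undefined 1) (axis undefined 1)"
    unfolding projrel_def by (auto intro!: exI[of _ 1] simp: axis_eq_0_iff)
  then show "\<exists>x. projrel x x" by blast
  show "symp projrel"
  proof (rule sympI)
    fix v w assume "projrel v w"
    then obtain c where "v \<noteq> 0" "w \<noteq> 0" "c \<noteq> 0" "w = c *s v"
      unfolding projrel_def by blast
    then have "v = inverse c *s w" by (simp add: vector_smult_assoc)
    then show "projrel w v" unfolding projrel_def
      using \<open>v \<noteq> 0\<close> \<open>w \<noteq> 0\<close> \<open>c \<noteq> 0\<close> by auto
  qed
  show "transp projrel"
  proof (rule transpI)
    fix u v w assume "projrel u v" "projrel v w"
    then obtain c d where "u \<noteq> 0" "w \<noteq> 0" "c \<noteq> 0" "d \<noteq> 0" "v = c *s u" "w = d *s v"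
      unfolding projrel_def by blast
    then have "w = (d * c) *s u" by (simp add: vector_smult_assoc)
    then show "projrel u w" unfolding projrel_def
      using \<open>u \<noteq> 0\<close> \<open>w \<noteq> 0\<close> \<open>c \<noteq> 0\<close> \<open>d \<noteq> 0\<close> by auto
  qed
qed

quotient_type 'n cproj = "complex^'n" / partial: projrel
  by (rule part_equivp_projrel)

definition proj_act :: "complex^('n::finite)^'n \<Rightarrow> 'n cproj \<Rightarrow> 'n cproj" where
  "proj_act P x = abs_cproj (P *v rep_cproj x)"

definition diag_mat :: "(('n::finite) \<Rightarrow> complex) \<Rightarrow> complex^'n^'n" where
  "diag_mat d = (\<chi> i j. if i = j then d i else 0)"

definition cholo_on :: "(complex^('n::finite) \<Rightarrow> complex^('m::finite)) \<Rightarrow> (complex^'n) set \<Rightarrow> bool" where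
  "cholo_on F U \<longleftrightarrow> (\<forall>w\<in>U. \<exists>L. (F has_derivative L) (at w) \<and> (\<forall>c x. L (c *s x) = c *s L x))"

text \<open>A map CP^n \<rightarrow> CP^n is holomorphic iff near every point of C^{n+1}-{0} it lifts
  (through the projection C^{n+1}-{0} \<rightarrow> CP^n) to a holomorphic map into C^{n+1}-{0}.\<close>
definition proj_holomorphic :: "(('n::finite) cproj \<Rightarrow> 'n cproj) \<Rightarrow> bool" where
  "proj_holomorphic f \<longleftrightarrow> (\<forall>v::complex^('n::finite). v \<noteq> 0 \<longrightarrow>
     (\<exists>U F. open U \<and> v \<in> U \<and> 0 \<notin> U \<and> cholo_on F U \<and>
        (\<forall>w\<in>U. F w \<noteq> 0 \<and> abs_cproj (F w) = f (abs_cproj w))))"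

definition proj_biholomorphic :: "(('n::finite) cproj \<Rightarrow> 'n cproj) \<Rightarrow> bool" where
  "proj_biholomorphic f \<longleftrightarrow> bij f \<and> proj_holomorphic f \<and> proj_holomorphic (inv f)"

definition simple_family :: "('k \<Rightarrow> complex) \<Rightarrow> 'k set \<Rightarrow> bool" where
  "simple_family lam K \<longleftrightarrow> (\<forall>k\<in>K. lam k \<noteq> 0) \<and>
     (\<forall>k\<in>K. \<forall>l\<in>K. k \<noteq> l \<longrightarrow>
        (\<forall>s::nat. s \<ge> 1 \<longrightarrow> lam k / lam l \<noteq> of_nat s \<and> lam k / lam l \<noteq> 1 / of_nat s))"

end

theory Submission
  imports Defs
begin


lemma projrel_refl_iff: "projrel v v \<longleftrightarrow> v \<noteq> 0"
  unfolding projrel_def by (auto intro!: exI[of _ 1])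

lemma abs_eq_iff:
  assumes "v \<noteq> 0" "w \<noteq> 0"
  shows "abs_cproj v = abs_cproj w \<longleftrightarrow> (\<exists>c. c \<noteq> 0 \<and> w = c *s v)"
proof -
  have "projrel v w \<longleftrightarrow> projrel v v \<and> projrel w w \<and> abs_cproj v = abs_cproj w"
    using Quotient3_rel[OF Quotient3_cproj] by blast
  then show ?thesis using assms by (auto simp: projrel_refl_iff projrel_def)
qed

lemma rep_nz: "rep_cproj x \<noteq> 0"
  using Quotient3_rep_reflp[OF Quotient3_cproj] projrel_refl_iff by blast

lemma abs_rep: "abs_cproj (rep_cproj x) = x"
  using Quotient3_abs_rep[OF Quotient3_cproj] by blast

lemma abs_smult: "v \<noteq> 0 \<Longrightarrow> c \<noteq> 0 \<Longrightarrow> abs_cproj (c *s v) = abs_cproj v"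
  by (subst abs_eq_iff) (auto simp: vec_eq_iff intro!: exI[of _ "inverse c"])

lemma mv_smult: "(A::complex^'n^'m) *v (c *s x) = c *s (A *v x)"
  by (simp add: matrix_vector_mult_def vec_eq_iff sum_distrib_left algebra_simps)

lemma inv_nz: "invertible (A::complex^'n^'n) \<Longrightarrow> x \<noteq> 0 \<Longrightarrow> A *v x \<noteq> 0"
  using inj_matrix_vector_mult[of A] by (metis injD matrix_vector_mult_0_right)

lemma matrix_inv_props:
  assumes "invertible (A::complex^'n^'n)"
  shows "A ** matrix_inv A = mat 1" "matrix_inv A ** A = mat 1"
  using someI_ex[OF assms[unfolded invertible_def]] unfolding matrix_inv_def by auto

lemma matrix_inv_invertible:
  assumes "invertible (A::complex^'n^'n)"
  shows "invertible (matrix_inv A)"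
  using matrix_inv_props[OF assms] unfolding invertible_def by blast

lemma inv_mv1: "invertible (A::complex^'n^'n) \<Longrightarrow> matrix_inv A *v (A *v x) = x"
  by (simp add: matrix_vector_mul_assoc matrix_inv_props)

lemma inv_mv2: "invertible (A::complex^'n^'n) \<Longrightarrow> A *v (matrix_inv A *v x) = x"
  by (simp add: matrix_vector_mul_assoc matrix_inv_props)

lemma proj_act_abs:
  assumes "invertible (P::complex^'n^'n)" "v \<noteq> 0"
  shows "proj_act P (abs_cproj v) = abs_cproj (P *v v)"
proof -
  have "abs_cproj (rep_cproj (abs_cproj v)) = abs_cproj v" by (rule abs_rep)
  then obtain c where c: "c \<noteq> 0" "rep_cproj (abs_cproj v) = c *s v"
    using abs_eq_iff[OF assms(2) rep_nz] by metis
  show ?thesis unfolding proj_act_def c(2) mv_smult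
    using abs_smult[OF inv_nz[OF assms] c(1)] .
qed

lemma diag_mv: "diag_mat d *v x = (\<chi> i. d i * x $ i)"
proof -
  have "\<And>i. (\<Sum>j\<in>UNIV. (if i = j then d i else 0) * x $ j) = d i * x $ i"
    by (simp add: if_distrib[of "\<lambda>a. a * _"] cong: if_cong)
  then show ?thesis by (simp add: diag_mat_def matrix_vector_mult_def vec_eq_iff)
qed
lemma bl_mv: "bounded_linear (\<lambda>x. (A::complex^'n^'m) *v x)"
  using linear_conv_bounded_linear matrix_vector_mul_linear by blast

lemma bl_smult: "bounded_linear (\<lambda>t::complex. t *s (u::complex^'n))"
  unfolding linear_conv_bounded_linear[symmetric]
  by (rule linearI) (simp_all add: vec_eq_iff algebra_simps)

lemma locally_zero_deriv:
  assumes "open W" "x \<in> W" "\<forall>w\<in>W. g w = 0" "(g has_derivative D) (at x)"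
  shows "D h = 0"
proof -
  have "((\<lambda>_. 0) has_derivative (\<lambda>_. 0)) (at x)" by simp
  then have "(g has_derivative (\<lambda>_. 0)) (at x)"
    by (rule has_derivative_transform_within_open[OF _ assms(1,2)]) (use assms(3) in auto)
  then show ?thesis using has_derivative_unique[OF assms(4)] by metis
qed

lemma par_deriv:
  fixes X Y :: "complex^'a \<Rightarrow> complex^'b"
  assumes "open W" "v \<in> W" "\<forall>w\<in>W. \<exists>c. Y w = c *s X w"
    "(X has_derivative DX) (at v)" "(Y has_derivative DY) (at v)"
    "X v $ l = 0" "Y v $ l = 0"
  shows "X v $ j * DY h $ l = Y v $ j * DX h $ l"
proof -
  have c: "((\<lambda>w. Z w $ i) has_derivative (\<lambda>h. DZ h $ i)) (at v)"
    if "(Z has_derivative DZ) (at v)" for Z :: "complex^'a \<Rightarrow> complex^'b" and DZ i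
    using bounded_linear.has_derivative[OF bounded_linear_vec_nth that] .
  have d: "((\<lambda>w. X w $ j * Y w $ l - X w $ l * Y w $ j) has_derivative
     (\<lambda>h. (X v $ j * DY h $ l + DX h $ j * Y v $ l) - (X v $ l * DY h $ j + DX h $ l * Y v $ j))) (at v)"
    by (intro has_derivative_diff has_derivative_mult c assms(4,5))
  have z: "\<forall>w\<in>W. X w $ j * Y w $ l - X w $ l * Y w $ j = 0"
    using assms(3) by (auto simp: algebra_simps)
  have "(X v $ j * DY h $ l + DX h $ j * Y v $ l) - (X v $ l * DY h $ j + DX h $ l * Y v $ j) = 0"
    by (rule locally_zero_deriv[OF assms(1,2) z d])
  then show ?thesis using assms(6,7) by (simp add: algebra_simps)
qed



lemma proj_act_comp:
  assumes "invertible (A::complex^'n^'n)" "invertible B"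
  shows "proj_act A (proj_act B x) = proj_act (A ** B) x"
proof -
  have x: "x = abs_cproj (rep_cproj x)" by (simp add: abs_rep)
  show ?thesis
    apply (subst (1 2) x)
    using assms rep_nz[of x] inv_nz[OF assms(2)]
    by (simp add: proj_act_abs invertible_mult matrix_vector_mul_assoc)
qed

lemma proj_act_id: "proj_act (mat 1) x = x"
  unfolding proj_act_def by (simp add: abs_rep)

lemma holo_lin:
  assumes "invertible (M::complex^'n^'n)"
  shows "proj_holomorphic (proj_act M)"
  unfolding proj_holomorphic_def
proof (intro allI impI)
  fix v :: "complex^'n" assume "v \<noteq> 0"
  show "\<exists>U F. open U \<and> v \<in> U \<and> 0 \<notin> U \<and> cholo_on F U \<and>
        (\<forall>w\<in>U. F w \<noteq> 0 \<and> abs_cproj (F w) = proj_act M (abs_cproj w))"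
  proof (intro exI conjI)
    show "open (UNIV - {0::complex^'n})" by (simp add: open_delete)
    show "cholo_on ((*v) M) (UNIV - {0})"
      unfolding cholo_on_def
      using bounded_linear_imp_has_derivative[OF bl_mv[of M]] mv_smult by blast
    show "\<forall>w\<in>UNIV - {0}. M *v w \<noteq> 0 \<and> abs_cproj (M *v w) = proj_act M (abs_cproj w)"
      using assms by (auto simp: inv_nz proj_act_abs)
  qed (use \<open>v \<noteq> 0\<close> in auto)
qed

lemma biholo_lin:
  assumes "invertible (M::complex^'n^'n)"
  shows "proj_biholomorphic (proj_act M)"
proof -
  let ?N = "matrix_inv M"
  have N: "invertible ?N" using matrix_inv_invertible[OF assms] .
  have 1: "proj_act ?N (proj_act M x) = x" for x
    using proj_act_comp[OF N assms] matrix_inv_props[OF assms] proj_act_id by simp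
  have 2: "proj_act M (proj_act ?N x) = x" for x
    using proj_act_comp[OF assms N] matrix_inv_props[OF assms] proj_act_id by simp
  have b: "bij (proj_act M)" by (rule o_bij[of "proj_act ?N"]) (auto simp: 1 2 fun_eq_iff)
  have "inv (proj_act M) = proj_act ?N"
    by (rule inv_equality) (auto simp: 1 2)
  then show ?thesis unfolding proj_biholomorphic_def
    using b holo_lin[OF assms] holo_lin[OF N] by simp
qed

lemma perm_mv:
  assumes "\<rho> permutes (UNIV::'n::finite set)"
  shows "(\<chi> i j. if i = \<rho> j then (1::complex) else 0) *v z = (\<chi> i. z $ inv \<rho> i)"
proof -
  have e: "(i = \<rho> j) = (j = inv \<rho> i)" for i j
    using permutes_inverses[OF assms] by metis
  show ?thesis
    by (simp add: matrix_vector_mult_def vec_eq_iff e if_distrib[of "\<lambda>a. a * _"] cong: if_cong)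
qed

lemma perm_invertible:
  assumes "\<rho> permutes (UNIV::'n::finite set)"
  shows "invertible (\<chi> i j. if i = \<rho> j then (1::complex) else 0)"
  unfolding invertible_eq_bij perm_mv[OF assms, abs_def]
  apply (rule o_bij[of "\<lambda>z. \<chi> k. z $ \<rho> k"])
  using permutes_inverses[OF assms] by (auto simp: fun_eq_iff vec_eq_iff)

lemma backward:
  fixes S T :: "complex^'n::finite^'n" and m :: 'n and I :: "'i set"
    and p q :: "'i \<Rightarrow> 'n \<Rightarrow> complex"
  assumes "invertible S" and "invertible T"
    and nz: "\<forall>r\<in>I. \<forall>k. p r k \<noteq> 0 \<and> q r k \<noteq> 0"
    and rho: "\<rho> permutes (UNIV::'n set)"
    and eq: "\<forall>r\<in>I. \<forall>k. k \<noteq> m \<longrightarrow> q r (\<rho> k) / q r (\<rho> m) = p r k / p r m"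
  shows "\<exists>f::'n cproj \<Rightarrow> 'n cproj. proj_biholomorphic f \<and>
            (\<forall>r\<in>I. \<forall>v. f (proj_act (S ** diag_mat (p r) ** matrix_inv S) v)
                        = proj_act (T ** diag_mat (q r) ** matrix_inv T) (f v))"
proof -
  define Pi where "Pi = (\<chi> i j. if i = \<rho> j then (1::complex) else 0)"
  define M where "M = T ** Pi ** matrix_inv S"
  have Si: "invertible (matrix_inv S)" "invertible (matrix_inv T)"
    using matrix_inv_invertible assms by auto
  have Pi: "invertible Pi" unfolding Pi_def by (rule perm_invertible[OF rho])
  have M: "invertible M" unfolding M_def using assms Si Pi by (simp add: invertible_mult)
  have dinv: "invertible (diag_mat d)" if "\<forall>k. d k \<noteq> 0" for d
  proof -
    have "diag_mat d ** diag_mat (\<lambda>k. inverse (d k)) = mat 1"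
      using that by (simp add: diag_mat_def matrix_matrix_mult_def mat_def vec_eq_iff
          if_distrib[of "\<lambda>a. a * _"] cong: if_cong)
    then show ?thesis using invertible_right_inverse by blast
  qed
  show ?thesis
  proof (intro exI conjI ballI allI)
    show "proj_biholomorphic (proj_act M)" by (rule biholo_lin[OF M])
    fix r and x :: "'n cproj" assume r: "r \<in> I"
    define c where "c = q r (\<rho> m) / p r m"
    have c0: "c \<noteq> 0" using nz r by (simp add: c_def)
    have qc: "q r (\<rho> k) = c * p r k" for k
      using eq r nz by (cases "k = m") (auto simp: c_def field_simps)
    let ?P = "S ** diag_mat (p r) ** matrix_inv S"
    let ?Q = "T ** diag_mat (q r) ** matrix_inv T"
    have dp: "invertible (diag_mat (p r))" "invertible (diag_mat (q r))"
      using dinv nz r by auto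
    have P: "invertible ?P" and Q: "invertible ?Q"
      using assms Si dp by (auto intro!: invertible_mult)
    have key: "?Q *v (M *v w) = c *s (M *v (?P *v w))" for w
    proof -
      define z where "z = matrix_inv S *v w"
      have "diag_mat (q r) *v (Pi *v z) = c *s (Pi *v (diag_mat (p r) *v z))"
        unfolding Pi_def perm_mv[OF rho] diag_mv
        using qc[of "inv \<rho> _"] permutes_inverses[OF rho] by (simp add: vec_eq_iff)
      then show ?thesis
        unfolding M_def z_def
        by (simp add: matrix_vector_mul_assoc[symmetric] inv_mv1 assms mv_smult)
    qed
    have x: "x = abs_cproj (rep_cproj x)" by (simp add: abs_rep)
    show "proj_act M (proj_act ?P x) = proj_act ?Q (proj_act M x)"
      apply (subst (1 2) x)
      using rep_nz[of x] inv_nz[OF P] inv_nz[OF M] inv_nz[OF Q] M P Q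
      by (simp add: proj_act_abs key abs_smult c0)
  qed
qed



lemma simple_inj:
  assumes "simple_family (\<lambda>k. Ln (d k / d m)) (UNIV - {m})" "\<forall>k. d k \<noteq> (0::complex)"
    "k \<noteq> l"
  shows "d k \<noteq> d l"
proof
  assume e: "d k = d l"
  have s: "\<forall>k\<in>UNIV-{m}. Ln (d k / d m) \<noteq> 0"
    using assms(1) unfolding simple_family_def by auto
  show False
  proof (cases "k = m \<or> l = m")
    case True
    then obtain a where a: "a \<noteq> m" "d a = d m" using e assms(3) by metis
    then have "Ln (d a / d m) \<noteq> 0" using s(1) by blast
    then show ?thesis using a assms(2) by simp
  next
    case False
    then have "\<forall>s::nat. s \<ge> 1 \<longrightarrow> Ln (d k / d m) / Ln (d l / d m) \<noteq> of_nat s"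
      using assms(1,3) unfolding simple_family_def by auto
    then have "Ln (d k / d m) / Ln (d l / d m) \<noteq> 1" by (metis order_refl of_nat_1)
    moreover have "Ln (d l / d m) \<noteq> 0" using s(1) False by auto
    ultimately show ?thesis using e by simp
  qed
qed

lemma bl_cs: "bounded_linear (\<lambda>z::complex^'n. c *s z)"
  unfolding linear_conv_bounded_linear[symmetric]
  by (rule linearI) (simp_all add: vec_eq_iff algebra_simps)

lemma conj_mv:
  assumes "invertible (S::complex^'n^'n)"
  shows "(S ** D ** matrix_inv S) *v w = S *v (D *v (matrix_inv S *v w))"
  by (simp add: matrix_vector_mul_assoc matrix_mul_assoc)

lemma diag_axis: "diag_mat d *v axis k 1 = d k *s axis k 1"
  by (simp add: diag_mv vec_eq_iff axis_def)

lemma supp_axis: "\<forall>i. i \<noteq> j \<longrightarrow> (z::complex^'n) $ i = 0 \<Longrightarrow> z = z $ j *s axis j 1"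
  by (auto simp: vec_eq_iff axis_def)



lemma forward:
  fixes S T :: "complex^'n::finite^'n" and m :: 'n and I :: "'i set"
    and p q :: "'i \<Rightarrow> 'n \<Rightarrow> complex" and f :: "'n cproj \<Rightarrow> 'n cproj"
  assumes S: "invertible S" and T: "invertible T"
    and nz: "\<forall>r\<in>I. \<forall>k. p r k \<noteq> 0 \<and> q r k \<noteq> 0"
    and sp: "\<forall>r\<in>I. simple_family (\<lambda>k. Ln (p r k / p r m)) (UNIV - {m})"
    and sq: "\<forall>r\<in>I. simple_family (\<lambda>k. Ln (q r k / q r m)) (UNIV - {m})"
    and bh: "proj_biholomorphic f"
    and cj: "\<forall>r\<in>I. \<forall>v. f (proj_act (S ** diag_mat (p r) ** matrix_inv S) v)
                        = proj_act (T ** diag_mat (q r) ** matrix_inv T) (f v)"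
    and r0: "r0 \<in> I"
  shows "\<exists>\<rho>. \<rho> permutes (UNIV::'n set) \<and>
                (\<forall>r\<in>I. \<forall>k. k \<noteq> m \<longrightarrow> q r (\<rho> k) / q r (\<rho> m) = p r k / p r m)"
proof -
  define Si where "Si = matrix_inv S"
  define Ti where "Ti = matrix_inv T"
  define P where "P r = S ** diag_mat (p r) ** Si" for r
  define Q where "Q r = T ** diag_mat (q r) ** Ti" for r
  define e where "e = (axis m 1 :: complex^'n)"
  define v where "v = S *v e"
  have Sinv: "invertible Si" "invertible Ti" unfolding Si_def Ti_def
    using matrix_inv_invertible S T by auto
  have SiS: "Si *v (S *v x) = x" "S *v (Si *v x) = x" for x
    unfolding Si_def using inv_mv1 inv_mv2 S by auto
  have TiT: "Ti *v (T *v x) = x" "T *v (Ti *v x) = x" for x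
    unfolding Ti_def using inv_mv1 inv_mv2 T by auto
  have dinv: "invertible (diag_mat d)" if "\<forall>k. d k \<noteq> 0" for d
  proof -
    have "diag_mat d ** diag_mat (\<lambda>k. inverse (d k)) = mat 1"
      using that by (simp add: diag_mat_def matrix_matrix_mult_def mat_def vec_eq_iff
          if_distrib[of "\<lambda>a. a * _"] cong: if_cong)
    then show ?thesis using invertible_right_inverse by blast
  qed
  have PQinv: "invertible (P r)" "invertible (Q r)" if "r \<in> I" for r
  proof -
    have "invertible (diag_mat (p r))" "invertible (diag_mat (q r))"
      using dinv nz that by auto
    then show "invertible (P r)" "invertible (Q r)"
      unfolding P_def Q_def using S T Sinv by (auto intro!: invertible_mult)
  qed
  have Pmv: "P r *v (S *v g) = S *v (diag_mat (p r) *v g)" for r g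
    unfolding P_def by (simp add: matrix_vector_mul_assoc[symmetric] SiS)
  have Qmv: "Ti *v (Q r *v x) = diag_mat (q r) *v (Ti *v x)" for r x
    unfolding Q_def by (simp add: matrix_vector_mul_assoc[symmetric] TiT)
  have cjP: "f (proj_act (P r) x) = proj_act (Q r) (f x)" if "r \<in> I" for r x
    using cj that unfolding P_def Q_def Si_def Ti_def by blast
  have e0: "e \<noteq> 0" unfolding e_def by (simp add: axis_eq_0_iff)
  have v0: "v \<noteq> 0" unfolding v_def using inv_nz[OF S e0] .
  have Pv: "P r *v v = p r m *s v" for r
    unfolding v_def e_def Pmv diag_axis mv_smult ..
  have fixP: "proj_act (P r) (abs_cproj v) = abs_cproj v" if "r \<in> I" for r
    using proj_act_abs[OF PQinv(1)[OF that] v0] Pv abs_smult[OF v0] nz that by simp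

  obtain U F where U: "open U" "v \<in> U" "0 \<notin> U" "cholo_on F U"
      and FU: "\<forall>w\<in>U. F w \<noteq> 0 \<and> abs_cproj (F w) = f (abs_cproj w)"
    using bh v0 unfolding proj_biholomorphic_def proj_holomorphic_def by blast
  obtain L where L: "(F has_derivative L) (at v)" "\<forall>c x. L (c *s x) = c *s L x"
    using U unfolding cholo_on_def by blast
  define u where "u = F v"
  have u0: "u \<noteq> 0" and fu: "abs_cproj u = f (abs_cproj v)" using FU U unfolding u_def by auto
  have Qu_abs: "abs_cproj (Q r *v u) = abs_cproj u" if "r \<in> I" for r
  proof -
    have "abs_cproj u = f (proj_act (P r) (abs_cproj v))" using fixP[OF that] fu by simp
    also have "\<dots> = proj_act (Q r) (abs_cproj u)" using cjP[OF that] fu by simp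
    also have "\<dots> = abs_cproj (Q r *v u)" using proj_act_abs[OF PQinv(2)[OF that] u0] .
    finally show ?thesis by simp
  qed
  define y where "y = Ti *v u"
  have uy: "u = T *v y" unfolding y_def using TiT by simp
  have y0: "y \<noteq> 0" using u0 uy by auto
  obtain c where c: "Q r0 *v u = c *s u"
    using Qu_abs[OF r0] abs_eq_iff[OF u0 inv_nz[OF PQinv(2)[OF r0] u0]] by metis
  have Dy: "q r0 i * y $ i = c * y $ i" for i
  proof -
    have "diag_mat (q r0) *v y = Ti *v (Q r0 *v u)" using Qmv y_def by simp
    also have "\<dots> = c *s y" unfolding c mv_smult y_def ..
    finally show ?thesis by (simp add: diag_mv vec_eq_iff)
  qed
  obtain j where yj: "y $ j \<noteq> 0" using y0 by (metis vec_eq_iff zero_index)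
  have qdist: "q r0 i \<noteq> q r0 j" if "i \<noteq> j" for i
    using simple_inj[of "q r0" m i j] sq nz r0 that by auto
  have ysupp: "\<forall>i. i \<noteq> j \<longrightarrow> y $ i = 0"
  proof (intro allI impI)
    fix i assume "i \<noteq> j"
    have "q r0 j = c" using Dy[of j] yj by simp
    then show "y $ i = 0" using Dy[of i] qdist[OF \<open>i \<noteq> j\<close>] by auto
  qed
  have Dyr: "diag_mat (q r) *v y = q r j *s y" for r
    using ysupp by (auto simp: diag_mv vec_eq_iff)
  have Qu: "Q r *v u = q r j *s u" for r
  proof -
    have "Ti *v (Q r *v u) = Ti *v (q r j *s u)"
      using Qmv[of r u] Dyr[of r] unfolding y_def mv_smult by simp
    then show ?thesis using TiT by (metis)
  qed
  define N where "N k l = (Ti *v L (S *v axis k 1)) $ l" for k l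

  have claimA: "q r l * N k l = q r j * (p r k / p r m) * N k l" if r: "r \<in> I" and l: "l \<noteq> j" for r k l
  proof -
    define a where "a = p r m"
    have a0: "a \<noteq> 0" using nz r a_def by auto
    define Pw where "Pw w = (1 / a) *s (P r *v w)" for w
    have blPw: "bounded_linear Pw" unfolding Pw_def
      using bounded_linear_compose[OF bl_cs bl_mv] .
    have Pwv: "Pw v = v" unfolding Pw_def Pv a_def using a0 a_def
      by (simp add: vector_smult_assoc)
    define W where "W = U \<inter> Pw -` U"
    have W: "open W" "v \<in> W"
      unfolding W_def using U Pwv
      by (auto intro!: open_Int continuous_open_vimage linear_continuous_at blPw)
    define X where "X w = Ti *v F (Pw w)" for w
    define Y where "Y w = Ti *v (Q r *v F w)" for w
    have par: "\<forall>w\<in>W. \<exists>c. Y w = c *s X w"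
    proof
      fix w assume w: "w \<in> W"
      then have wU: "w \<in> U" "Pw w \<in> U" unfolding W_def by auto
      then have w0: "w \<noteq> 0" using U by auto
      have Pw0: "P r *v w \<noteq> 0" using inv_nz[OF PQinv(1)[OF r] w0] .
      have "abs_cproj (F (Pw w)) = f (abs_cproj (Pw w))" using FU wU by auto
      also have "abs_cproj (Pw w) = abs_cproj (P r *v w)"
        unfolding Pw_def using abs_smult[OF Pw0] a0 by simp
      also have "\<dots> = proj_act (P r) (abs_cproj w)" using proj_act_abs[OF PQinv(1)[OF r] w0] by simp
      also have "f \<dots> = proj_act (Q r) (f (abs_cproj w))" using cjP[OF r] .
      also have "\<dots> = proj_act (Q r) (abs_cproj (F w))" using FU wU by auto
      also have "\<dots> = abs_cproj (Q r *v F w)"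
        by (rule proj_act_abs[OF PQinv(2)[OF r]]) (use FU wU in auto)
      finally have "abs_cproj (F (Pw w)) = abs_cproj (Q r *v F w)" .
      then obtain c where "Q r *v F w = c *s F (Pw w)"
        using abs_eq_iff FU wU inv_nz[OF PQinv(2)[OF r]] by metis
      then show "\<exists>c. Y w = c *s X w" unfolding X_def Y_def by (metis mv_smult)
    qed
    have dX: "(X has_derivative (\<lambda>h. Ti *v L (Pw h))) (at v)"
    proof -
      have "(F has_derivative L) (at (Pw v))" using L Pwv by simp
      from has_derivative_compose[OF bounded_linear_imp_has_derivative[OF blPw] this]
      have "((\<lambda>w. F (Pw w)) has_derivative (\<lambda>h. L (Pw h))) (at v)" .
      then show ?thesis unfolding X_def by (rule bounded_linear.has_derivative[OF bl_mv])
    qed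
    have dY: "(Y has_derivative (\<lambda>h. Ti *v (Q r *v L h))) (at v)"
      unfolding Y_def
      by (rule bounded_linear.has_derivative[OF bl_mv bounded_linear.has_derivative[OF bl_mv L(1)]])
    have Xv: "X v = y" unfolding X_def Pwv y_def u_def ..
    have Yv: "Y v = q r j *s y" unfolding Y_def u_def[symmetric] Qu mv_smult y_def ..
    define h where "h = S *v axis k 1"
    from par_deriv[OF W par dX dY, of l j h]
    have "y $ j * (Ti *v (Q r *v L h)) $ l = q r j * y $ j * (Ti *v L (Pw h)) $ l"
      using Xv Yv ysupp l by simp
    then have 1: "(Ti *v (Q r *v L h)) $ l = q r j * (Ti *v L (Pw h)) $ l"
      using yj by (simp add: algebra_simps)
    have "Pw h = (p r k / a) *s h"
      unfolding Pw_def h_def Pmv diag_axis mv_smult by (simp add: vector_smult_assoc)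
    then have 2: "L (Pw h) = (p r k / a) *s L h" using L(2) by simp
    show ?thesis using 1 unfolding Qmv 2 mv_smult N_def h_def[symmetric] a_def
      by (simp add: diag_mv)
  qed
  have bijf: "bij f" and hinv: "proj_holomorphic (inv f)"
    using bh unfolding proj_biholomorphic_def by auto
  have invf: "inv f (f x) = x" for x using bijf by (simp add: bij_is_inj)
  obtain UG G where UG: "open UG" "u \<in> UG" "0 \<notin> UG" "cholo_on G UG"
      and GU: "\<forall>w\<in>UG. G w \<noteq> 0 \<and> abs_cproj (G w) = inv f (abs_cproj w)"
    using hinv u0 unfolding proj_holomorphic_def by blast
  obtain LG where LG: "(G has_derivative LG) (at u)" "\<forall>c x. LG (c *s x) = c *s LG x"
    using UG unfolding cholo_on_def by blast
  have Gu: "abs_cproj (G u) = abs_cproj v" using GU UG fu invf by auto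
  obtain c0 where c0: "c0 \<noteq> 0" "G u = c0 *s v"
    using Gu abs_eq_iff[OF v0, of "G u"] GU UG by metis
  have claimB1: "(Si *v LG (L (S *v axis k 1))) $ k = c0" if k: "k \<noteq> m" for k
  proof -
    have "continuous (at v) F" using has_derivative_continuous[OF L(1)] .
    then obtain S0 where S0: "open S0" "v \<in> S0" "\<forall>x\<in>S0. F x \<in> UG"
      using continuous_at_open[of v F] UG u_def by metis
    define W where "W = S0 \<inter> U"
    have W: "open W" "v \<in> W" unfolding W_def using S0 U by auto
    define X where "X w = Si *v w" for w
    define Y where "Y w = Si *v G (F w)" for w
    have par: "\<forall>w\<in>W. \<exists>c. Y w = c *s X w"
    proof
      fix w assume w: "w \<in> W"
      then have wU: "w \<in> U" "F w \<in> UG" unfolding W_def using S0 by auto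
      then have w0: "w \<noteq> 0" using U by auto
      have "abs_cproj (G (F w)) = inv f (abs_cproj (F w))" using GU wU by auto
      also have "\<dots> = abs_cproj w" using FU wU invf by auto
      finally obtain c where "G (F w) = c *s w"
        using abs_eq_iff[OF w0, of "G (F w)"] GU wU by metis
      then show "\<exists>c. Y w = c *s X w" unfolding X_def Y_def by (metis mv_smult)
    qed
    have dX: "(X has_derivative (\<lambda>h. Si *v h)) (at v)"
      unfolding X_def by (rule bounded_linear_imp_has_derivative[OF bl_mv])
    have dY: "(Y has_derivative (\<lambda>h. Si *v LG (L h))) (at v)"
    proof -
      have "(G has_derivative LG) (at (F v))" using LG u_def by simp
      from has_derivative_compose[OF L(1) this]
      have "((\<lambda>w. G (F w)) has_derivative (\<lambda>h. LG (L h))) (at v)" .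
      then show ?thesis unfolding Y_def by (rule bounded_linear.has_derivative[OF bl_mv])
    qed
    have Xv: "X v = e" unfolding X_def v_def SiS ..
    have "Y v = Si *v (c0 *s v)" unfolding Y_def u_def[symmetric] c0(2) ..
    then have Yv: "Y v = c0 *s e" by (simp add: mv_smult v_def SiS)
    from par_deriv[OF W par dX dY, of k m "S *v axis k 1"]
    show ?thesis using Xv Yv k by (simp add: e_def SiS axis_def)
  qed
  have claimB2: "(Si *v LG u) $ k = 0" if k: "k \<noteq> m" for k
  proof -
    define W where "W = (UNIV - {0::complex}) \<inter> (\<lambda>t. t *s u) -` UG"
    have W: "open W" "1 \<in> W" unfolding W_def using UG
      by (auto intro!: open_Int continuous_open_vimage linear_continuous_at bl_smult open_delete)
    have z: "\<forall>t\<in>W. (Si *v G (t *s u)) $ k = 0"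
    proof
      fix t assume t: "t \<in> W"
      then have t0: "t \<noteq> 0" and tu: "t *s u \<in> UG" unfolding W_def by auto
      have "abs_cproj (G (t *s u)) = inv f (abs_cproj (t *s u))" using GU tu by auto
      also have "\<dots> = abs_cproj v" using abs_smult[OF u0 t0] fu invf by simp
      finally obtain c where "G (t *s u) = c *s v"
        using abs_eq_iff[OF v0, of "G (t *s u)"] GU tu by metis
      then show "(Si *v G (t *s u)) $ k = 0" using k
        by (simp add: mv_smult v_def SiS e_def axis_def)
    qed
    have "(G has_derivative LG) (at (1 *s u))" using LG by simp
    from has_derivative_compose[OF bounded_linear_imp_has_derivative[OF bl_smult] this]
    have "((\<lambda>t. G (t *s u)) has_derivative (\<lambda>t. LG (t *s u))) (at 1)" .
    from bounded_linear.has_derivative[OF bounded_linear_vec_nth bounded_linear.has_derivative[OF bl_mv this]]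
    have "((\<lambda>t. (Si *v G (t *s u)) $ k) has_derivative (\<lambda>t. (Si *v LG (t *s u)) $ k)) (at 1)" .
    from locally_zero_deriv[OF W z this, of 1] show ?thesis by simp
  qed
  have claimB: "\<exists>l. l \<noteq> j \<and> N k l \<noteq> 0" if k: "k \<noteq> m" for k
  proof (rule ccontr)
    assume "\<not> ?thesis"
    then have zs: "\<forall>l. l \<noteq> j \<longrightarrow> (Ti *v L (S *v axis k 1)) $ l = 0" unfolding N_def by auto
    define z where "z = Ti *v L (S *v axis k 1)"
    define \<gamma> where "\<gamma> = z $ j / y $ j"
    have "z = z $ j *s axis j 1" using supp_axis zs z_def by blast
    moreover have "y = y $ j *s axis j 1" using supp_axis ysupp by blast
    ultimately have "z = \<gamma> *s y" unfolding \<gamma>_def using yj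
      by (metis (no_types, lifting) nonzero_eq_divide_eq vector_smult_assoc)
    then have "L (S *v axis k 1) = \<gamma> *s u"
      using TiT uy unfolding z_def by (metis mv_smult)
    then have "(Si *v LG (L (S *v axis k 1))) $ k = \<gamma> * (Si *v LG u) $ k"
      using LG(2) by (simp add: mv_smult)
    then show False using claimB1[OF k] claimB2[OF k] c0 by simp
  qed
  define \<sigma> where "\<sigma> k = (if k = m then j else (SOME l. l \<noteq> j \<and> N k l \<noteq> 0))" for k
  have \<sigma>1: "\<sigma> k \<noteq> j \<and> N k (\<sigma> k) \<noteq> 0" if "k \<noteq> m" for k
    using someI_ex[OF claimB[OF that]] that unfolding \<sigma>_def by simp
  have ratio: "q r (\<sigma> k) = q r j * (p r k / p r m)" if "r \<in> I" "k \<noteq> m" for r k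
    using claimA[OF that(1), of "\<sigma> k" k] \<sigma>1[OF that(2)] by (metis mult_cancel_right)
  have "inj \<sigma>"
  proof (rule injI)
    fix k k' assume eq: "\<sigma> k = \<sigma> k'"
    show "k = k'"
    proof (rule ccontr)
      assume ne: "k \<noteq> k'"
      show False
      proof (cases "k = m \<or> k' = m")
        case True
        have sm: "\<sigma> m = j" unfolding \<sigma>_def by simp
        from True show ?thesis using eq ne \<sigma>1 sm by metis
      next
        case False
        then have "q r0 j * (p r0 k / p r0 m) = q r0 j * (p r0 k' / p r0 m)"
          using ratio[OF r0] eq by metis
        then have "p r0 k = p r0 k'" using nz r0 by auto
        then show False using simple_inj[of "p r0" m k k'] sp nz r0 ne by auto
      qed
    qed
  qed
  then have "bij \<sigma>" using finite_UNIV_inj_surj[of \<sigma>] by (simp add: bij_def)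
  then have perm: "\<sigma> permutes UNIV" by (intro bij_imp_permutes) auto
  show ?thesis
  proof (intro exI conjI ballI allI impI)
    show "\<sigma> permutes UNIV" by (rule perm)
    fix r k assume r: "r \<in> I" and k: "k \<noteq> m"
    show "q r (\<sigma> k) / q r (\<sigma> m) = p r k / p r m"
      using ratio[OF r k] nz r by (simp add: \<sigma>_def)
  qed
qed


theorem theorem6p8:
  fixes S T :: "complex^'n::finite^'n" and m :: 'n and I :: "'i set"
    and p q :: "'i \<Rightarrow> 'n \<Rightarrow> complex"
  assumes "CARD('n) \<ge> 3"
    and "invertible S" and "invertible T"
    and "\<forall>r\<in>I. \<forall>k. p r k \<noteq> 0 \<and> q r k \<noteq> 0"
    and "\<forall>r\<in>I. simple_family (\<lambda>k. Ln (p r k / p r m)) (UNIV - {m})"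
    and "\<forall>r\<in>I. simple_family (\<lambda>k. Ln (q r k / q r m)) (UNIV - {m})"
  shows "(\<exists>f::'n cproj \<Rightarrow> 'n cproj. proj_biholomorphic f \<and>
            (\<forall>r\<in>I. \<forall>v. f (proj_act (S ** diag_mat (p r) ** matrix_inv S) v)
                        = proj_act (T ** diag_mat (q r) ** matrix_inv T) (f v)))
         \<longleftrightarrow> (\<exists>\<rho>. \<rho> permutes (UNIV::'n set) \<and>
                (\<forall>r\<in>I. \<forall>k. k \<noteq> m \<longrightarrow> q r (\<rho> k) / q r (\<rho> m) = p r k / p r m))"
proof
  assume "\<exists>f::'n cproj \<Rightarrow> 'n cproj. proj_biholomorphic f \<and>
            (\<forall>r\<in>I. \<forall>v. f (proj_act (S ** diag_mat (p r) ** matrix_inv S) v)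
                        = proj_act (T ** diag_mat (q r) ** matrix_inv T) (f v))"
  then obtain f :: "'n cproj \<Rightarrow> 'n cproj" where f: "proj_biholomorphic f"
     "\<forall>r\<in>I. \<forall>v. f (proj_act (S ** diag_mat (p r) ** matrix_inv S) v)
                        = proj_act (T ** diag_mat (q r) ** matrix_inv T) (f v)" by blast
  show "\<exists>\<rho>. \<rho> permutes (UNIV::'n set) \<and>
                (\<forall>r\<in>I. \<forall>k. k \<noteq> m \<longrightarrow> q r (\<rho> k) / q r (\<rho> m) = p r k / p r m)"
  proof (cases "I = {}")
    case True
    then show ?thesis by (intro exI[of _ id]) (auto simp: permutes_id)
  next
    case False
    then obtain r0 where "r0 \<in> I" by blast
    from forward[OF assms(2-6) f this] show ?thesis .
  qed
next
  assume "\<exists>\<rho>. \<rho> permutes (UNIV::'n set) \<and>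
                (\<forall>r\<in>I. \<forall>k. k \<noteq> m \<longrightarrow> q r (\<rho> k) / q r (\<rho> m) = p r k / p r m)"
  then obtain \<rho> where "\<rho> permutes (UNIV::'n set)"
    "\<forall>r\<in>I. \<forall>k. k \<noteq> m \<longrightarrow> q r (\<rho> k) / q r (\<rho> m) = p r k / p r m" by blast
  from backward[OF assms(2-4) this] show "\<exists>f::'n cproj \<Rightarrow> 'n cproj. proj_biholomorphic f \<and>
            (\<forall>r\<in>I. \<forall>v. f (proj_act (S ** diag_mat (p r) ** matrix_inv S) v)
                        = proj_act (T ** diag_mat (q r) ** matrix_inv T) (f v))" .
qed

end
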